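(* Let $0<c_0<C_0<\infty$ and $\bar\lambda_{m,n}>0$ with $C_0\bar\lambda_{m,n}\le 1/2$, and let $K\ge1$. There exist constants $C_{\mathrm L},C_{\mathrm U}>0$ depending only on $c_0,C_0$ such that for all $\Lambda,\Lambda'\in\mathcal{L}_{K,\bar\lambda_{m,n}}$, $$\frac{C_{\mathrm L}}{\bar\lambda_{m,n}}\|\Lambda-\Lambda'\|_F^2\le \mathrm{d}_{\mathrm{KL}}\big(P^{(nm)}_\Lambda\,\big\|\,P^{(nm)}_{\Lambda'}\big)\le\frac{C_{\mathrm U}}{\bar\lambda_{m,n}}\|\Lambda-\Lambda'\|_F^2.$$
   Context: $\mathcal{L}_{K,\bar\lambda_{m,n}}:=\{\Lambda=(\lambda_{ij})\in\mathbb{R}_+^{n\times m}:\mathrm{rank}(\Lambda)\le K,\ c_0\bar\lambda_{m,n}\le\lambda_{ij}\le C_0\bar\lambda_{m,n}\ \forall (i,j)\in[n]\times[m]\}$. For $\Lambda$ in this class, $P^{(nm)}_\Lambda:=\bigotimes_{i=1}^n\bigotimes_{j=1}^m\mathrm{Bern}(1-e^{-\lambda_{ij}})$ is a product of Bernoulli laws on $\{0,1\}^{n\times m}$. $\mathrm{d}_{\mathrm{KL}}$ is the Kullback–Leibler divergence and $\|\cdot\|_F$ the Frobenius norm. *)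

theory Defs
  imports "HOL-Probability.Probability" "Jordan_Normal_Form.DL_Rank"
begin

definition lowrank_class :: "nat \<Rightarrow> nat \<Rightarrow> nat \<Rightarrow> real \<Rightarrow> real \<Rightarrow> real \<Rightarrow> real mat set" where
  "lowrank_class n m K c0 C0 lbar =
     {L. L \<in> carrier_mat n m \<and> vec_space.rank n L \<le> K \<and>
         (\<forall>i<n. \<forall>j<m. 0 \<le> L $$ (i,j) \<and> c0 * lbar \<le> L $$ (i,j) \<and> L $$ (i,j) \<le> C0 * lbar)}"

text \<open>Product of Bernoulli(1 - exp(-lambda_ij)) laws on {0,1}^{[n] x [m]};
  an outcome is a function on [n] x [m] (value False outside), True encodes 1.\<close>
definition bern_prod :: "nat \<Rightarrow> nat \<Rightarrow> real mat \<Rightarrow> (nat \<times> nat \<Rightarrow> bool) pmf" where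
  "bern_prod n m L = Pi_pmf ({..<n} \<times> {..<m}) False
      (\<lambda>(i,j). bernoulli_pmf (1 - exp (- (L $$ (i,j)))))"

text \<open>KL divergence d_KL(P || Q) (natural logarithm), via the library notion;
  note KL_divergence b M N is the divergence of N from M.\<close>
definition dKL :: "'a pmf \<Rightarrow> 'a pmf \<Rightarrow> real" where
  "dKL P Q = KL_divergence (exp 1) (measure_pmf Q) (measure_pmf P)"

definition frobenius_norm :: "real mat \<Rightarrow> real" where
  "frobenius_norm A = sqrt (\<Sum>i<dim_row A. \<Sum>j<dim_col A. (A $$ (i,j))\<^sup>2)"

end

theory Submission
  imports Defs
begin


lemma ln_up1:
  fixes y :: real assumes "0 < y" "y \<le> 1"
  shows "ln y \<le> (y - 1) - (y - 1)^2 / 2"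
proof -
  let ?h = "\<lambda>t::real. ln t - (t - 1) + (t - 1)^2 / 2"
  have "?h y \<le> ?h 1"
  proof (rule DERIV_nonneg_imp_nondecreasing[of y 1 ?h])
    show "y \<le> 1" by fact
    fix x :: real assume x: "y \<le> x" "x \<le> 1"
    then have xp: "0 < x" using assms by auto
    show "\<exists>d. (?h has_real_derivative d) (at x) \<and> d \<ge> 0"
    proof (intro exI conjI)
      show "(?h has_real_derivative (1 / x - 1 + (x - 1))) (at x)"
        using xp by (auto intro!: derivative_eq_intros simp: power2_eq_square field_simps)
      have "1 / x - 1 + (x - 1) = ((x - 1)^2) / x" using xp by (simp add: field_simps power2_eq_square)
      also have "\<dots> \<ge> 0" using xp by simp
      finally show "1 / x - 1 + (x - 1) \<ge> 0" .
    qed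
  qed
  then show ?thesis by simp
qed

lemma ln_up2:
  fixes y :: real assumes "1 \<le> y"
  shows "ln y \<le> (y - 1 / y) / 2"
proof -
  let ?h = "\<lambda>t::real. (t - 1 / t) / 2 - ln t"
  have "?h 1 \<le> ?h y"
  proof (rule DERIV_nonneg_imp_nondecreasing[of 1 y ?h])
    show "1 \<le> y" by fact
    fix x :: real assume x: "1 \<le> x" "x \<le> y"
    then have xp: "0 < x" by auto
    show "\<exists>d. (?h has_real_derivative d) (at x) \<and> d \<ge> 0"
    proof (intro exI conjI)
      show "(?h has_real_derivative ((1 + 1 / x^2) / 2 - 1 / x)) (at x)"
        using xp by (auto intro!: derivative_eq_intros simp: power2_eq_square field_simps)
      have "(1 + 1 / x^2) / 2 - 1 / x = (x - 1)^2 / (2 * x^2)" using xp by (simp add: field_simps power2_eq_square)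
      also have "\<dots> \<ge> 0" using xp by simp
      finally show "(1 + 1 / x^2) / 2 - 1 / x \<ge> 0" .
    qed
  qed
  then show ?thesis by simp
qed

lemma klterm_lower:
  fixes P Q M :: real assumes "0 < P" "0 < Q" "P \<le> M" "Q \<le> M"
  shows "P - Q + (P - Q)^2 / (2 * M) \<le> P * ln (P / Q)"
proof (cases "Q \<le> P")
  case True
  let ?y = "Q / P"
  have y: "0 < ?y" "?y \<le> 1" using assms True by auto
  have l: "ln ?y \<le> (?y - 1) - (?y - 1)^2 / 2" by (rule ln_up1[OF y])
  have e: "ln (P / Q) = - ln ?y" using assms by (simp add: ln_div)
  have "P * ln ?y \<le> P * ((?y - 1) - (?y - 1)^2 / 2)"
    using l assms by (simp add: mult_left_mono)
  then have "P * ln (P / Q) \<ge> P * ((1 - ?y) + (?y - 1)^2 / 2)"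
    using e by (simp add: algebra_simps)
  also have "P * ((1 - ?y) + (?y - 1)^2 / 2) = P - Q + (P - Q)^2 / (2 * P)"
    using assms by (simp add: field_simps power2_eq_square)
  also have "(P - Q)^2 / (2 * M) \<le> (P - Q)^2 / (2 * P)"
    using assms by (intro divide_left_mono) auto
  ultimately show ?thesis by linarith
next
  case False
  let ?y = "Q / P"
  have y: "1 \<le> ?y" using assms False by auto
  have l: "ln ?y \<le> (?y - 1 / ?y) / 2" by (rule ln_up2[OF y])
  have e: "ln (P / Q) = - ln ?y" using assms by (simp add: ln_div)
  have "P * ln ?y \<le> P * ((?y - 1 / ?y) / 2)"
    using l assms by (simp add: mult_left_mono)
  then have "P * ln (P / Q) \<ge> P * ((1 / ?y - ?y) / 2)"
    using e by (simp add: algebra_simps diff_divide_distrib)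
  also have "P * ((1 / ?y - ?y) / 2) = P - Q + (P - Q)^2 / (2 * Q)"
    using assms by (simp add: field_simps power2_eq_square)
  also have "(P - Q)^2 / (2 * M) \<le> (P - Q)^2 / (2 * Q)"
    using assms by (intro divide_left_mono) auto
  ultimately show ?thesis by linarith
qed

lemma klterm_lower0:
  fixes P Q :: real assumes "0 < P" "0 < Q"
  shows "P - Q \<le> P * ln (P / Q)"
proof -
  have e: "ln (P / Q) = - ln (Q / P)" using assms by (simp add: ln_div)
  have "ln (Q / P) \<le> Q / P - 1" using assms by (intro ln_le_minus_one) auto
  then have "P * ln (Q / P) \<le> P * (Q / P - 1)" using assms by (simp add: mult_left_mono)
  then have "P * ln (P / Q) \<ge> P * (1 - Q / P)" using e by (simp add: algebra_simps)
  moreover have "P * (1 - Q / P) = P - Q" using assms by (simp add: field_simps)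
  ultimately show ?thesis by linarith
qed

lemma klterm_upper:
  fixes P Q :: real assumes "0 < P" "0 < Q"
  shows "P * ln (P / Q) \<le> P - Q + (P - Q)^2 / Q"
proof -
  have "ln (P / Q) \<le> P / Q - 1" using assms by (intro ln_le_minus_one) auto
  then have "P * ln (P / Q) \<le> P * (P / Q - 1)" using assms by (simp add: mult_left_mono)
  also have "P * (P / Q - 1) = P - Q + (P - Q)^2 / Q" using assms by (simp add: field_simps power2_eq_square)
  finally show ?thesis .
qed

lemma exp_diff_bounds:
  fixes a b :: real assumes "0 \<le> a" "a \<le> b" "b \<le> 1/2"
  shows "(b - a) / 2 \<le> exp (-a) - exp (-b)" "exp (-a) - exp (-b) \<le> b - a"
proof -
  have e1: "exp (b - a) \<ge> 1 + (b - a)" by (rule exp_ge_add_one_self)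
  have e1': "b - a \<le> exp (b - a) - 1" using e1 by linarith
  have e2: "exp (-b) \<ge> 1 - b" using exp_ge_add_one_self[of "-b"] by simp
  have "exp (-a) - exp (-b) = exp (-b) * (exp (b - a) - 1)" by (simp add: algebra_simps flip: exp_add)
  also have "\<dots> \<ge> (1/2) * (b - a)"
    using e1' e2 assms by (intro mult_mono) auto
  finally show "(b - a) / 2 \<le> exp (-a) - exp (-b)" by simp
  have e3: "exp (a - b) \<ge> 1 + (a - b)" by (rule exp_ge_add_one_self)
  have e3': "1 - exp (a - b) \<le> b - a" using e3 by linarith
  have e4: "exp (-a) \<le> 1" using assms by simp
  have "exp (-a) - exp (-b) = exp (-a) * (1 - exp (a - b))" by (simp add: algebra_simps flip: exp_add)
  also have "\<dots> \<le> 1 * (b - a)"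
    using e3' e4 assms by (intro mult_mono) auto
  finally show "exp (-a) - exp (-b) \<le> b - a" by simp
qed

lemma exp_diff_sq:
  fixes a b :: real assumes "0 \<le> a" "a \<le> 1/2" "0 \<le> b" "b \<le> 1/2"
  shows "(a - b)^2 / 4 \<le> (exp (-a) - exp (-b))^2" "(exp (-a) - exp (-b))^2 \<le> (a - b)^2"
proof -
  have "(a - b)^2 / 4 \<le> (exp (-a) - exp (-b))^2 \<and> (exp (-a) - exp (-b))^2 \<le> (a - b)^2"
  proof (cases "a \<le> b")
    case True
    note h = exp_diff_bounds[OF assms(1) True assms(4)]
    have "((b - a)/2)^2 \<le> (exp (-a) - exp (-b))^2" using h True by (intro power_mono) auto
    moreover have "(exp (-a) - exp (-b))^2 \<le> (b - a)^2" using h True by (intro power_mono) auto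
    ultimately show ?thesis by (simp add: power2_eq_square algebra_simps)
  next
    case False
    note h = exp_diff_bounds[OF assms(3) _ assms(2)]
    have "((a - b)/2)^2 \<le> (exp (-b) - exp (-a))^2" using h False by (intro power_mono) auto
    moreover have "(exp (-b) - exp (-a))^2 \<le> (a - b)^2" using h False by (intro power_mono) auto
    ultimately show ?thesis by (simp add: power2_eq_square algebra_simps)
  qed
  then show "(a - b)^2 / 4 \<le> (exp (-a) - exp (-b))^2" "(exp (-a) - exp (-b))^2 \<le> (a - b)^2" by auto
qed

definition bkl :: "real \<Rightarrow> real \<Rightarrow> real" where
  "bkl p q = p * ln (p / q) + (1 - p) * ln ((1 - p) / (1 - q))"

lemma bkl_bounds:
  fixes a b c C :: real
  assumes c: "0 < c" and a: "c \<le> a" "a \<le> C" and b: "c \<le> b" "b \<le> C" and C: "C \<le> 1/2"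
  shows "(a - b)^2 / (8 * C) \<le> bkl (1 - exp (-a)) (1 - exp (-b))"
    and "bkl (1 - exp (-a)) (1 - exp (-b)) \<le> (a - b)^2 * (2 / c + 2)"
proof -
  define p where "p = 1 - exp (-a)"
  define q where "q = 1 - exp (-b)"
  have ap: "0 < a" and bp: "0 < b" using a b c by auto
  have p0: "0 < p" using ap by (simp add: p_def)
  have q0: "0 < q" using bp by (simp add: q_def)
  have p1: "0 < 1 - p" by (simp add: p_def)
  have q1: "0 < 1 - q" by (simp add: q_def)
  have pa: "p \<le> a" using exp_ge_add_one_self[of "-a"] by (simp add: p_def)
  have qb: "q \<le> b" using exp_ge_add_one_self[of "-b"] by (simp add: q_def)
  have qhalf: "q \<ge> b / 2"
  proof -
    have "exp b \<ge> 1 + b" by (rule exp_ge_add_one_self)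
    then have "exp (-b) * exp b \<ge> exp (-b) * (1 + b)" by (simp add: mult_left_mono)
    then have h: "1 \<ge> exp (-b) + b * exp (-b)" by (simp add: algebra_simps flip: exp_add)
    have "exp (-b) \<ge> 1 - b" using exp_ge_add_one_self[of "-b"] by simp
    then have "b * exp (-b) \<ge> b * (1 - b)" using bp by (simp add: mult_left_mono)
    moreover have "b * (1 - b) \<ge> b * (1/2)" using bp b C by (intro mult_left_mono) auto
    ultimately show ?thesis using h by (simp add: q_def)
  qed
  have q1half: "1 - q \<ge> 1/2"
    using exp_ge_add_one_self[of "-b"] b C by (simp add: q_def)
  have pq: "p - q = exp (-b) - exp (-a)" by (simp add: p_def q_def)
  have sq: "(a - b)^2 / 4 \<le> (p - q)^2" "(p - q)^2 \<le> (a - b)^2"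
    using exp_diff_sq[of a b] ap bp a b C pq by (auto simp: power2_commute)
  have B: "bkl p q = p * ln (p / q) + (1 - p) * ln ((1 - p) / (1 - q))" by (simp add: bkl_def)
  have L1: "p - q + (p - q)^2 / (2 * C) \<le> p * ln (p / q)"
    using klterm_lower[OF p0 q0, of C] pa qb a b by linarith
  have L0: "(1 - p) - (1 - q) \<le> (1 - p) * ln ((1 - p) / (1 - q))"
    using klterm_lower0[OF p1 q1] .
  have "(a - b)^2 / 4 / (2 * C) \<le> (p - q)^2 / (2 * C)"
    using sq a c by (intro divide_right_mono) auto
  then show "(a - b)^2 / (8 * C) \<le> bkl (1 - exp (-a)) (1 - exp (-b))"
    using L1 L0 B by (simp add: p_def q_def)
  have U1: "p * ln (p / q) \<le> p - q + (p - q)^2 / q" using klterm_upper[OF p0 q0] .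
  have U0: "(1 - p) * ln ((1 - p) / (1 - q)) \<le> (1 - p) - (1 - q) + ((1 - p) - (1 - q))^2 / (1 - q)"
    using klterm_upper[OF p1 q1] .
  have "(p - q)^2 / q \<le> (a - b)^2 / (c / 2)"
    using sq qhalf b c by (intro frac_le) auto
  moreover have "((1 - p) - (1 - q))^2 / (1 - q) \<le> (a - b)^2 / (1 / 2)"
    using sq q1half by (intro frac_le) (auto simp: power2_commute)
  moreover have "(a - b)^2 / (c / 2) + (a - b)^2 / (1 / 2) = (a - b)^2 * (2 / c + 2)"
    by (simp add: field_simps)
  ultimately show "bkl (1 - exp (-a)) (1 - exp (-b)) \<le> (a - b)^2 * (2 / c + 2)"
    using U1 U0 B by (simp add: p_def q_def)
qed



lemma dKL_pmf:
  fixes P Q :: "'a pmf"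
  assumes fin: "finite (set_pmf P)" and supp: "\<And>x. x \<in> set_pmf P \<Longrightarrow> x \<in> set_pmf Q"
  shows "dKL P Q = (\<integral>x. ln (pmf P x / pmf Q x) \<partial>measure_pmf P)"
proof -
  define f where "f = (\<lambda>x. ennreal (pmf P x / pmf Q x))"
  have dens: "density (measure_pmf Q) f = measure_pmf P"
  proof -
    have "density (measure_pmf Q) f = density (count_space UNIV) (\<lambda>x. ennreal (pmf Q x) * f x)"
      unfolding measure_pmf_eq_density[of Q] by (rule density_density_eq) auto
    also have "(\<lambda>x. ennreal (pmf Q x) * f x) = (\<lambda>x. ennreal (pmf P x))"
    proof
      fix x
      show "ennreal (pmf Q x) * f x = ennreal (pmf P x)"
      proof (cases "x \<in> set_pmf Q")
        case True
        then have "pmf Q x > 0" by (simp add: pmf_positive)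
        then show ?thesis unfolding f_def by (simp flip: ennreal_mult)
      next
        case False
        then have "x \<notin> set_pmf P" using supp by blast
        then show ?thesis using False by (simp add: f_def set_pmf_eq)
      qed
    qed
    also have "density (count_space UNIV) \<dots> = measure_pmf P"
      by (rule measure_pmf_eq_density[symmetric])
    finally show ?thesis .
  qed
  have "AE x in measure_pmf Q. f x = RN_deriv (measure_pmf Q) (measure_pmf P) x"
    by (rule RN_deriv_unique_sigma_finite[OF _ dens]) (auto simp: prob_space_imp_sigma_finite prob_space_measure_pmf)
  then have ae: "\<forall>x\<in>set_pmf Q. f x = RN_deriv (measure_pmf Q) (measure_pmf P) x"
    by (simp add: AE_measure_pmf_iff)
  have "dKL P Q = (\<integral>x. log (exp 1) (enn2real (RN_deriv (measure_pmf Q) (measure_pmf P) x)) \<partial>measure_pmf P)"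
    by (simp add: dKL_def KL_divergence_def entropy_density_def comp_def)
  also have "\<dots> = (\<integral>x. ln (pmf P x / pmf Q x) \<partial>measure_pmf P)"
  proof (rule integral_cong_AE)
    show "AE x in measure_pmf P. log (exp 1) (enn2real (RN_deriv (measure_pmf Q) (measure_pmf P) x)) = ln (pmf P x / pmf Q x)"
      unfolding AE_measure_pmf_iff
    proof
      fix x assume x: "x \<in> set_pmf P"
      then have "f x = RN_deriv (measure_pmf Q) (measure_pmf P) x" using ae supp by blast
      then have "RN_deriv (measure_pmf Q) (measure_pmf P) x = ennreal (pmf P x / pmf Q x)"
        by (simp add: f_def)
      then show "log (exp 1) (enn2real (RN_deriv (measure_pmf Q) (measure_pmf P) x)) = ln (pmf P x / pmf Q x)"
        by (simp add: log_def)
    qed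
  qed auto
  finally show ?thesis .
qed

lemma dKL_bern_prod:
  fixes L L' :: "real mat"
  assumes pos: "\<And>i j. i < n \<Longrightarrow> j < m \<Longrightarrow> 0 < L $$ (i,j) \<and> 0 < L' $$ (i,j)"
  shows "dKL (bern_prod n m L) (bern_prod n m L') =
    (\<Sum>a\<in>{..<n} \<times> {..<m}. bkl (1 - exp (- (L $$ a))) (1 - exp (- (L' $$ a))))"
proof -
  define A where "A = {..<n} \<times> {..<m}"
  define dL where "dL = (\<lambda>M::real mat. \<lambda>a::nat\<times>nat. bernoulli_pmf (1 - exp (- (M $$ a))))"
  have bp: "bern_prod n m M = Pi_pmf A False (dL M)" for M :: "real mat"
    unfolding bern_prod_def A_def dL_def by (rule Pi_pmf_cong) auto
  have finA: "finite A" by (simp add: A_def)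
  have posA: "0 < L $$ a" "0 < L' $$ a" if "a \<in> A" for a
    using pos that by (auto simp: A_def)
  have pr: "0 < 1 - exp (- (M $$ a))" "1 - exp (- (M $$ a)) < 1" if "0 < M $$ a" for M :: "real mat" and a
  proof -
    have "exp (- (M $$ a)) < exp 0" using that by (subst exp_less_cancel_iff) simp
    then show "0 < 1 - exp (- (M $$ a))" "1 - exp (- (M $$ a)) < 1" by simp_all
  qed
  have setd: "set_pmf (dL M a) = UNIV" if "0 < M $$ a" for M :: "real mat" and a
    using pr[OF that] by (simp add: dL_def)
  have setP: "set_pmf (Pi_pmf A False (dL M)) = PiE_dflt A False (\<lambda>_. UNIV)"
    if "\<And>a. a \<in> A \<Longrightarrow> 0 < M $$ a" for M :: "real mat"
    using that setd by (simp add: set_Pi_pmf[OF finA] PiE_dflt_def)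
  define P where "P = Pi_pmf A False (dL L)"
  define Q where "Q = Pi_pmf A False (dL L')"
  have setPQ: "set_pmf P = PiE_dflt A False (\<lambda>_. UNIV)" "set_pmf Q = PiE_dflt A False (\<lambda>_. UNIV)"
    unfolding P_def Q_def using setP posA by auto
  have finP: "finite (set_pmf P)" using setPQ finA by auto
  define g where "g = (\<lambda>a b. ln (pmf (dL L a) b / pmf (dL L' a) b))"
  have dpos: "0 < pmf (dL M a) b" if "0 < M $$ a" for M :: "real mat" and a b
    using setd[OF that] by (simp add: pmf_positive)
  have "dKL P Q = (\<integral>x. ln (pmf P x / pmf Q x) \<partial>measure_pmf P)"
    by (rule dKL_pmf[OF finP]) (simp add: setPQ)
  also have "\<dots> = (\<integral>x. (\<Sum>a\<in>A. g a (x a)) \<partial>measure_pmf P)"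
  proof (rule integral_cong_AE)
    show "AE x in measure_pmf P. ln (pmf P x / pmf Q x) = (\<Sum>a\<in>A. g a (x a))"
      unfolding AE_measure_pmf_iff
    proof
      fix x assume x: "x \<in> set_pmf P"
      then have out: "\<forall>y. y \<notin> A \<longrightarrow> x y = False" by (simp add: setPQ PiE_dflt_def)
      have "pmf P x / pmf Q x = (\<Prod>a\<in>A. pmf (dL L a) (x a)) / (\<Prod>a\<in>A. pmf (dL L' a) (x a))"
        using out by (simp add: P_def Q_def pmf_Pi[OF finA])
      also have "\<dots> = (\<Prod>a\<in>A. pmf (dL L a) (x a) / pmf (dL L' a) (x a))"
        by (simp add: prod_dividef)
      finally have "ln (pmf P x / pmf Q x) = ln (\<Prod>a\<in>A. pmf (dL L a) (x a) / pmf (dL L' a) (x a))" by simp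
      also have "\<dots> = (\<Sum>a\<in>A. ln (pmf (dL L a) (x a) / pmf (dL L' a) (x a)))"
        using finA dpos posA by (intro ln_prod) (auto simp: less_imp_neq[symmetric] dest!: posA)
      finally show "ln (pmf P x / pmf Q x) = (\<Sum>a\<in>A. g a (x a))" by (simp add: g_def)
    qed
  qed auto
  also have "\<dots> = (\<Sum>a\<in>A. \<integral>x. g a (x a) \<partial>measure_pmf P)"
    by (simp add: integrable_measure_pmf_finite[OF finP])
  also have "\<dots> = (\<Sum>a\<in>A. bkl (1 - exp (- (L $$ a))) (1 - exp (- (L' $$ a))))"
  proof (rule sum.cong[OF refl])
    fix a assume a: "a \<in> A"
    have "(\<integral>x. g a (x a) \<partial>measure_pmf P) = (\<integral>b. g a b \<partial>measure_pmf (map_pmf (\<lambda>x. x a) P))"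
      by simp
    also have "map_pmf (\<lambda>x. x a) P = dL L a"
      unfolding P_def using Pi_pmf_component[OF finA, of a False "dL L"] a by simp
    also have "(\<integral>b. g a b \<partial>measure_pmf (dL L a)) = bkl (1 - exp (- (L $$ a))) (1 - exp (- (L' $$ a)))"
      using pr[OF posA(1)[OF a]] pr[OF posA(2)[OF a]]
      by (simp add: dL_def g_def bkl_def)
    finally show "(\<integral>x. g a (x a) \<partial>measure_pmf P) = bkl (1 - exp (- (L $$ a))) (1 - exp (- (L' $$ a)))" .
  qed
  finally show ?thesis by (simp add: bp P_def Q_def A_def)
qed

lemma frob_sq:
  assumes "L \<in> carrier_mat n m" "L' \<in> carrier_mat n m"
  shows "(frobenius_norm (L - L'))\<^sup>2 = (\<Sum>a\<in>{..<n} \<times> {..<m}. (L $$ a - L' $$ a)\<^sup>2)"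
proof -
  have "(frobenius_norm (L - L'))\<^sup>2 = (\<Sum>i<n. \<Sum>j<m. ((L - L') $$ (i,j))\<^sup>2)"
    unfolding frobenius_norm_def using assms by (simp add: sum_nonneg)
  also have "\<dots> = (\<Sum>i<n. \<Sum>j<m. (L $$ (i,j) - L' $$ (i,j))\<^sup>2)"
    using assms by (intro sum.cong refl) auto
  also have "\<dots> = (\<Sum>a\<in>{..<n} \<times> {..<m}. (L $$ a - L' $$ a)\<^sup>2)"
    by (simp add: sum.cartesian_product case_prod_beta)
  finally show ?thesis .
qed

theorem theoremL6:
  fixes c0 C0 :: real
  assumes "0 < c0" and "c0 < C0"
  shows "\<exists>CL CU :: real. 0 < CL \<and> 0 < CU \<and>
    (\<forall>(lbar::real) (K::nat) (n::nat) (m::nat) L L'.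
       0 < lbar \<longrightarrow> C0 * lbar \<le> 1/2 \<longrightarrow> 1 \<le> K \<longrightarrow>
       L \<in> lowrank_class n m K c0 C0 lbar \<longrightarrow> L' \<in> lowrank_class n m K c0 C0 lbar \<longrightarrow>
       CL / lbar * (frobenius_norm (L - L'))\<^sup>2 \<le> dKL (bern_prod n m L) (bern_prod n m L') \<and>
       dKL (bern_prod n m L) (bern_prod n m L') \<le> CU / lbar * (frobenius_norm (L - L'))\<^sup>2)"
proof (intro exI conjI allI impI)
  show "0 < 1 / (8 * C0)" using assms by simp
  show "0 < 3 / c0" using assms by simp
  fix lbar :: real and K n m :: nat and L L' :: "real mat"
  assume lb: "0 < lbar" and Cl: "C0 * lbar \<le> 1/2" and K: "1 \<le> K"
    and LL: "L \<in> lowrank_class n m K c0 C0 lbar" and LL': "L' \<in> lowrank_class n m K c0 C0 lbar"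
  define A where "A = {..<n} \<times> {..<m}"
  have car: "L \<in> carrier_mat n m" "L' \<in> carrier_mat n m" using LL LL' by (auto simp: lowrank_class_def)
  have ent: "c0 * lbar \<le> L $$ a" "L $$ a \<le> C0 * lbar" "c0 * lbar \<le> L' $$ a" "L' $$ a \<le> C0 * lbar"
    if "a \<in> A" for a
    using LL LL' that by (auto simp: lowrank_class_def A_def)
  have c0l: "0 < c0 * lbar" using assms lb by simp
  have dk: "dKL (bern_prod n m L) (bern_prod n m L') = (\<Sum>a\<in>A. bkl (1 - exp (- (L $$ a))) (1 - exp (- (L' $$ a))))"
    unfolding A_def
    by (rule dKL_bern_prod) (use ent c0l in \<open>fastforce simp: A_def\<close>)
  have fr: "(frobenius_norm (L - L'))\<^sup>2 = (\<Sum>a\<in>A. (L $$ a - L' $$ a)\<^sup>2)"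
    unfolding A_def by (rule frob_sq[OF car])
  have lo: "1 / (8 * C0) / lbar * (L $$ a - L' $$ a)\<^sup>2 \<le> bkl (1 - exp (- (L $$ a))) (1 - exp (- (L' $$ a)))"
    and up: "bkl (1 - exp (- (L $$ a))) (1 - exp (- (L' $$ a))) \<le> 3 / c0 / lbar * (L $$ a - L' $$ a)\<^sup>2"
    if a: "a \<in> A" for a
  proof -
    note bb = bkl_bounds[OF c0l ent(1)[OF a] ent(2)[OF a] ent(3)[OF a] ent(4)[OF a] Cl]
    have "1 / (8 * C0) / lbar * (L $$ a - L' $$ a)\<^sup>2 = (L $$ a - L' $$ a)\<^sup>2 / (8 * (C0 * lbar))"
      by (simp add: field_simps)
    then show "1 / (8 * C0) / lbar * (L $$ a - L' $$ a)\<^sup>2 \<le> bkl (1 - exp (- (L $$ a))) (1 - exp (- (L' $$ a)))"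
      using bb(1) by simp
    have "2 \<le> 1 / (c0 * lbar)"
    proof -
      have "c0 * lbar \<le> 1/2" using assms lb Cl by (smt (verit) mult_right_mono)
      then show ?thesis using c0l by (simp add: field_simps)
    qed
    then have "2 / (c0 * lbar) + 2 \<le> 3 / c0 / lbar" by (simp add: field_simps)
    then have "(L $$ a - L' $$ a)\<^sup>2 * (2 / (c0 * lbar) + 2) \<le> (L $$ a - L' $$ a)\<^sup>2 * (3 / c0 / lbar)"
      by (intro mult_left_mono) auto
    then show "bkl (1 - exp (- (L $$ a))) (1 - exp (- (L' $$ a))) \<le> 3 / c0 / lbar * (L $$ a - L' $$ a)\<^sup>2"
      using bb(2) by (simp add: mult.commute)
  qed
  show "1 / (8 * C0) / lbar * (frobenius_norm (L - L'))\<^sup>2 \<le> dKL (bern_prod n m L) (bern_prod n m L')"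
    unfolding dk fr sum_distrib_left by (rule sum_mono) (rule lo)
  show "dKL (bern_prod n m L) (bern_prod n m L') \<le> 3 / c0 / lbar * (frobenius_norm (L - L'))\<^sup>2"
    unfolding dk fr sum_distrib_left by (rule sum_mono) (rule up)
qed

end
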